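(* The fraction of algebraic tangle expressions is invariant under the elementary moves, twists, flypes and ring moves; explicitly, for every algebraic tangle expression $A$ (products being left-associative, $2:=101$, $\overline2:=\overline1 0\overline1$): (i) elementary moves: $\mathrm{Frac}(01)=\mathrm{Frac}(00)$ and $\mathrm{Frac}(10\overline1)=\mathrm{Frac}(0)=\mathrm{Frac}(\overline101)$; (ii) twist: $\mathrm{Frac}(10\rho_x(A)0\overline1)=\mathrm{Frac}(A)=\mathrm{Frac}(\overline10\rho_x(A)01)$; (iii) flypes: $\mathrm{Frac}(\overline A\,\overline1\,1\,\overline1)=\mathrm{Frac}(\overline A\,0\,1\,\overline1\,1\,0)=\mathrm{Frac}(A)=\mathrm{Frac}(\overline A\,0\,\overline1\,1\,\overline1\,0)=\mathrm{Frac}(\overline A\,1\,\overline1\,1)$; (iv) ring move: $\mathrm{Frac}\bigl(A0(2(\overline20)0)\bigr)=\mathrm{Frac}\bigl(2(\overline20)A\bigr)$.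
   Context: Algebraic tangle expressions are built from the basic tangles $0,\infty,1,\overline1$ by sums and products $AB:=A0+B$, where $A0$ denotes the reflection of $A$ under $(x,y,z)\mapsto(-y,-x,z)$; products are left-associative ($ABC=(AB)C$). $\overline A$ is the expression obtained from $A$ by swapping every $1$ with $\overline1$ (the mirror image). The fraction is defined recursively by $\mathrm{Frac}(0)=0$, $\mathrm{Frac}(\infty)=\infty$, $\mathrm{Frac}(1)=1$, $\mathrm{Frac}(\overline1)=-1$, $\mathrm{Frac}(LR)=\mathrm{Frac}(R)+1/\mathrm{Frac}(L)$, in $\mathbb{Q}\cup\{\infty\}$ with $1/0=\infty$, $1/\infty=0$, $x+\infty=\infty+x=\infty$, $-\infty=\infty$. The rotation $\rho_x$ (by $\pi$ about the $x$-axis) acts on expressions recursively by $\rho_x(c)=\rho_y(c)=c$ for basic $c$, $\rho_x(LR)=\rho_y(L)\rho_x(R)$, $\rho_y(LR)=(\rho_y(R)0)(\rho_x(L)0)$. *)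

theory Defs
  imports Main "HOL-Library.Extended_Nat" Complex_Main
begin

datatype tangle = TZero | TInf | TOne | TOneBar | TProd tangle tangle

text \<open>Extended rationals Q \<union> {\<infinity>}: None represents \<infinity>.\<close>
type_synonym qinf = "rat option"

fun qplus :: "qinf \<Rightarrow> qinf \<Rightarrow> qinf" where
  "qplus (Some x) (Some y) = Some (x + y)"
| "qplus _ _ = None"

fun qrecip :: "qinf \<Rightarrow> qinf" where
  "qrecip None = Some 0"
| "qrecip (Some x) = (if x = 0 then None else Some (1 / x))"

fun Frac :: "tangle \<Rightarrow> qinf" where
  "Frac TZero = Some 0"
| "Frac TInf = None"
| "Frac TOne = Some 1"
| "Frac TOneBar = Some (-1)"
| "Frac (TProd L R) = qplus (Frac R) (qrecip (Frac L))"

fun mirror :: "tangle \<Rightarrow> tangle" where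
  "mirror TOne = TOneBar"
| "mirror TOneBar = TOne"
| "mirror (TProd L R) = TProd (mirror L) (mirror R)"
| "mirror c = c"

fun rho_x :: "tangle \<Rightarrow> tangle" and rho_y :: "tangle \<Rightarrow> tangle" where
  "rho_x (TProd L R) = TProd (rho_y L) (rho_x R)"
| "rho_x c = c"
| "rho_y (TProd L R) = TProd (TProd (rho_y R) TZero) (TProd (rho_x L) TZero)"
| "rho_y c = c"

abbreviation (input) tp :: "tangle \<Rightarrow> tangle \<Rightarrow> tangle" (infixl "\<cdot>" 70) where
  "tp \<equiv> TProd"

definition two :: tangle where "two = TOne \<cdot> TZero \<cdot> TOne"
definition twobar :: tangle where "twobar = TOneBar \<cdot> TZero \<cdot> TOneBar"

end

theory Submission
  imports Defs
begin

fun qneg :: "qinf \<Rightarrow> qinf" where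
  "qneg None = None"
| "qneg (Some x) = Some (- x)"

lemma recip_recip[simp]: "qrecip (qrecip x) = x"
  by (cases x) auto

lemma qplus_comm: "qplus a b = qplus b a"
  by (cases a; cases b) auto

lemma qplus_zero[simp]: "qplus (Some 0) x = x" "qplus x (Some 0) = x"
  by (cases x; simp)+

lemma frac_rho: "Frac (rho_x A) = Frac A \<and> Frac (rho_y A) = Frac A"
proof (induction A)
  case (TProd L R)
  then show ?case by (simp add: qplus_comm)
qed auto

lemma frac_mirror: "Frac (mirror A) = qneg (Frac A)"
proof (induction A)
  case (TProd L R)
  then show ?case
    by (cases "Frac L"; cases "Frac R") (auto simp: divide_simps)
qed auto

theorem lemma6:
  fixes A :: tangle
  shows "Frac (TZero \<cdot> TOne) = Frac (TZero \<cdot> TZero)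
    \<and> Frac (TOne \<cdot> TZero \<cdot> TOneBar) = Frac TZero
    \<and> Frac TZero = Frac (TOneBar \<cdot> TZero \<cdot> TOne)
    \<and> Frac (TOne \<cdot> TZero \<cdot> rho_x A \<cdot> TZero \<cdot> TOneBar) = Frac A
    \<and> Frac A = Frac (TOneBar \<cdot> TZero \<cdot> rho_x A \<cdot> TZero \<cdot> TOne)
    \<and> Frac (mirror A \<cdot> TOneBar \<cdot> TOne \<cdot> TOneBar)
        = Frac (mirror A \<cdot> TZero \<cdot> TOne \<cdot> TOneBar \<cdot> TOne \<cdot> TZero)
    \<and> Frac (mirror A \<cdot> TZero \<cdot> TOne \<cdot> TOneBar \<cdot> TOne \<cdot> TZero) = Frac A
    \<and> Frac A = Frac (mirror A \<cdot> TZero \<cdot> TOneBar \<cdot> TOne \<cdot> TOneBar \<cdot> TZero)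
    \<and> Frac (mirror A \<cdot> TZero \<cdot> TOneBar \<cdot> TOne \<cdot> TOneBar \<cdot> TZero)
        = Frac (mirror A \<cdot> TOne \<cdot> TOneBar \<cdot> TOne)
    \<and> Frac (A \<cdot> TZero \<cdot> (two \<cdot> (twobar \<cdot> TZero) \<cdot> TZero))
        = Frac (two \<cdot> (twobar \<cdot> TZero) \<cdot> A)"
proof (cases "Frac A")
  case None
  then show ?thesis by (simp add: frac_rho frac_mirror two_def twobar_def)
next
  case (Some x)
  then show ?thesis
    by (simp add: frac_rho frac_mirror two_def twobar_def) (auto simp: field_simps)
qed

end
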